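(* Let $(\Omega,\mathcal{F},\mathbb{P})$ be a probability space, let $n\in\mathbb{N}$, and let $Y_1,\ldots,Y_n$ be real-valued random variables with $\mathbb{E}[|Y_i|]<\infty$ for each $i$. For an integrable random variable $Z$ let $\mathrm{MAD}(Z):=\mathbb{E}\big[|Z-\mathbb{E}[Z]|\big]$. Let $\mathbb{R}^n_+=\{\boldsymbol{x}\in\mathbb{R}^n: x_i\ge 0 \text{ for all } i\}$ and $\Delta^{n-1}=\{\boldsymbol{x}\in\mathbb{R}^n_+:\sum_{i=1}^n x_i=1\}$. Then the following are equivalent: (i) $\mathrm{MAD}\big(\sum_{i=1}^n x_iY_i\big)=\sum_{i=1}^n x_i\,\mathrm{MAD}(Y_i)$ for every $\boldsymbol{x}\in\mathbb{R}^n_+$; (ii) $\mathrm{MAD}\big(\sum_{i=1}^n x_iY_i\big)=\sum_{i=1}^n x_i\,\mathrm{MAD}(Y_i)$ for every $\boldsymbol{x}\in\Delta^{n-1}$; (iii) $\mathrm{MAD}\big(\sum_{i\in I}Y_i\big)=\sum_{i\in I}\mathrm{MAD}(Y_i)$ for every nonempty subset $I\subseteq\{1,\ldots,n\}$; (iv) $(Y_i-\mathbb{E}[Y_i])(Y_j-\mathbb{E}[Y_j])\geq 0$ almost surely for every $i,j\in\{1,\ldots,n\}$ with $i\neq j$. *)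

theory Defs
  imports "HOL-Probability.Probability"
begin

definition MAD :: "'a measure \<Rightarrow> ('a \<Rightarrow> real) \<Rightarrow> real" where
  "MAD M Z = (\<integral>\<omega>. \<bar>Z \<omega> - (\<integral>\<omega>'. Z \<omega>' \<partial>M)\<bar> \<partial>M)"

end

theory Submission
  imports Defs
begin

lemma MAD_scale:
  assumes "0 \<le> (c::real)"
  shows "MAD M (\<lambda>\<omega>. c * f \<omega>) = c * MAD M f"
proof -
  have "\<And>\<omega>. \<bar>c * f \<omega> - c * (\<integral>\<omega>'. f \<omega>' \<partial>M)\<bar> = c * \<bar>f \<omega> - (\<integral>\<omega>'. f \<omega>' \<partial>M)\<bar>"
    using assms by (simp add: abs_mult right_diff_distrib[symmetric])
  then show ?thesis unfolding MAD_def by simp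
qed

lemma abs_sum_same_sign:
  fixes a x :: "nat \<Rightarrow> real"
  assumes "finite I" "\<And>i. i \<in> I \<Longrightarrow> 0 \<le> x i"
    and "\<And>i j. i \<in> I \<Longrightarrow> j \<in> I \<Longrightarrow> i \<noteq> j \<Longrightarrow> 0 \<le> a i * a j"
  shows "\<bar>\<Sum>i\<in>I. x i * a i\<bar> = (\<Sum>i\<in>I. x i * \<bar>a i\<bar>)"
proof (cases "\<exists>i\<in>I. a i > 0")
  case True
  then obtain k where k: "k \<in> I" "a k > 0" by blast
  have pos: "\<forall>j\<in>I. 0 \<le> a j"
  proof
    fix j assume j: "j \<in> I"
    show "0 \<le> a j"
    proof (cases "j = k")
      case False
      then have "0 \<le> a k * a j" using assms(3)[OF k(1) j] by auto
      then show ?thesis using k(2) by (simp add: zero_le_mult_iff)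
    qed (use k in auto)
  qed
  have "0 \<le> (\<Sum>i\<in>I. x i * a i)" using pos assms(2) by (intro sum_nonneg) auto
  then show ?thesis using pos by (auto intro!: sum.cong)
next
  case False
  then have neg: "\<forall>j\<in>I. a j \<le> 0" by (auto simp: not_less)
  have "(\<Sum>i\<in>I. x i * a i) \<le> 0" using neg assms(2)
    by (intro sum_nonpos) (auto simp: mult_nonneg_nonpos)
  then have "\<bar>\<Sum>i\<in>I. x i * a i\<bar> = (\<Sum>i\<in>I. x i * (- a i))"
    by (simp add: sum_negf[symmetric])
  also have "\<dots> = (\<Sum>i\<in>I. x i * \<bar>a i\<bar>)" using neg by (intro sum.cong) auto
  finally show ?thesis .
qed

theorem theorem2:
  fixes M :: "'a measure" and n :: nat and Y :: "nat \<Rightarrow> 'a \<Rightarrow> real"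
  assumes "prob_space M"
    and "\<And>i. i \<in> {1..n} \<Longrightarrow> Y i \<in> borel_measurable M"
    and "\<And>i. i \<in> {1..n} \<Longrightarrow> integrable M (Y i)"
  defines "C1 \<equiv> (\<forall>x :: nat \<Rightarrow> real. (\<forall>i\<in>{1..n}. 0 \<le> x i) \<longrightarrow>
              MAD M (\<lambda>\<omega>. \<Sum>i=1..n. x i * Y i \<omega>) = (\<Sum>i=1..n. x i * MAD M (Y i)))"
    and "C2 \<equiv> (\<forall>x :: nat \<Rightarrow> real. (\<forall>i\<in>{1..n}. 0 \<le> x i) \<and> (\<Sum>i=1..n. x i) = 1 \<longrightarrow>
              MAD M (\<lambda>\<omega>. \<Sum>i=1..n. x i * Y i \<omega>) = (\<Sum>i=1..n. x i * MAD M (Y i)))"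
    and "C3 \<equiv> (\<forall>I. I \<subseteq> {1..n} \<and> I \<noteq> {} \<longrightarrow>
              MAD M (\<lambda>\<omega>. \<Sum>i\<in>I. Y i \<omega>) = (\<Sum>i\<in>I. MAD M (Y i)))"
    and "C4 \<equiv> (\<forall>i\<in>{1..n}. \<forall>j\<in>{1..n}. i \<noteq> j \<longrightarrow>
              (AE \<omega> in M. 0 \<le> (Y i \<omega> - (\<integral>\<omega>'. Y i \<omega>' \<partial>M)) * (Y j \<omega> - (\<integral>\<omega>'. Y j \<omega>' \<partial>M))))"
  shows "(C1 \<longleftrightarrow> C2) \<and> (C2 \<longleftrightarrow> C3) \<and> (C3 \<longleftrightarrow> C4)"
proof -
  interpret prob_space M by fact
  define E where "E i = (\<integral>\<omega>. Y i \<omega> \<partial>M)" for i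
  define Z where "Z i \<omega> = Y i \<omega> - E i" for i \<omega>
  have intZ: "integrable M (\<lambda>\<omega>. \<bar>Z i \<omega>\<bar>)" if "i \<in> {1..n}" for i
    unfolding Z_def using assms(3)[OF that] by auto
  have MADY: "MAD M (Y i) = (\<integral>\<omega>. \<bar>Z i \<omega>\<bar> \<partial>M)" for i
    unfolding MAD_def Z_def E_def ..
  have lemA: "MAD M (\<lambda>\<omega>. \<Sum>i\<in>I. x i * Y i \<omega>) = (\<integral>\<omega>. \<bar>\<Sum>i\<in>I. x i * Z i \<omega>\<bar> \<partial>M)"
    if I: "I \<subseteq> {1..n}" for I x
  proof -
    have fI: "finite I" using I finite_subset by blast
    have "(\<integral>\<omega>. (\<Sum>i\<in>I. x i * Y i \<omega>) \<partial>M) = (\<Sum>i\<in>I. x i * E i)"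
      unfolding E_def using I assms(3)
      by (subst Bochner_Integration.integral_sum) (auto intro!: sum.cong)
    moreover have "\<And>\<omega>. (\<Sum>i\<in>I. x i * Y i \<omega>) - (\<Sum>i\<in>I. x i * E i) = (\<Sum>i\<in>I. x i * Z i \<omega>)"
      unfolding Z_def by (simp add: sum_subtractf[symmetric] right_diff_distrib)
    ultimately show ?thesis unfolding MAD_def by simp
  qed
  have 12: "C1 \<longrightarrow> C2" unfolding C1_def C2_def by blast
  have 23: "C2 \<longrightarrow> C3"
  proof (intro impI, unfold C3_def, intro allI impI)
    assume c2: C2
    fix I assume I: "I \<subseteq> {1..n} \<and> I \<noteq> {}"
    have fI: "finite I" using I finite_subset by blast
    define k where "k = real (card I)"
    have kpos: "k > 0" unfolding k_def using I fI by (simp add: card_gt_0_iff)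
    define x where "x i = (if i \<in> I then 1 / k else 0)" for i
    have s1: "(\<Sum>i=1..n. x i * g i) = (\<Sum>i\<in>I. g i) / k" for g :: "nat \<Rightarrow> real"
    proof -
      have "(\<Sum>i=1..n. x i * g i) = (\<Sum>i=1..n. if i \<in> I then g i / k else 0)"
        unfolding x_def by (intro sum.cong) auto
      also have "\<dots> = (\<Sum>i\<in>{1..n} \<inter> I. g i / k)" by (subst sum.inter_restrict) auto
      also have "{1..n} \<inter> I = I" using I by auto
      finally show ?thesis by (simp add: sum_divide_distrib)
    qed
    have "(\<Sum>i=1..n. x i) = 1" using s1[of "\<lambda>_. 1"] kpos unfolding k_def by simp
    moreover have "\<forall>i\<in>{1..n}. 0 \<le> x i" unfolding x_def using kpos by auto
    ultimately have "MAD M (\<lambda>\<omega>. \<Sum>i=1..n. x i * Y i \<omega>) = (\<Sum>i=1..n. x i * MAD M (Y i))"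
      using c2 unfolding C2_def by blast
    then have h1: "MAD M (\<lambda>\<omega>. (\<Sum>i\<in>I. Y i \<omega>) / k) = (\<Sum>i\<in>I. MAD M (Y i)) / k"
      unfolding s1 .
    have eqf: "(\<lambda>\<omega>. (1/k) * (\<Sum>i\<in>I. Y i \<omega>)) = (\<lambda>\<omega>. (\<Sum>i\<in>I. Y i \<omega>) / k)"
      by simp
    have "MAD M (\<lambda>\<omega>. (1/k) * (\<Sum>i\<in>I. Y i \<omega>)) = (\<Sum>i\<in>I. MAD M (Y i)) / k"
      unfolding eqf by (rule h1)
    then have "(1/k) * MAD M (\<lambda>\<omega>. \<Sum>i\<in>I. Y i \<omega>) = (\<Sum>i\<in>I. MAD M (Y i)) / k"
      using MAD_scale[of "1/k" M] kpos by simp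
    then show "MAD M (\<lambda>\<omega>. \<Sum>i\<in>I. Y i \<omega>) = (\<Sum>i\<in>I. MAD M (Y i))"
      using kpos by (simp add: field_simps)
  qed
  have 34: "C3 \<longrightarrow> C4"
  proof (intro impI, unfold C4_def, intro ballI impI)
    assume c3: C3
    fix i j assume ij: "i \<in> {1..n}" "j \<in> {1..n}" "i \<noteq> j"
    have "MAD M (\<lambda>\<omega>. \<Sum>k\<in>{i,j}. Y k \<omega>) = (\<Sum>k\<in>{i,j}. MAD M (Y k))"
    proof -
      have "{i,j} \<subseteq> {1..n} \<and> {i,j} \<noteq> {}" using ij by auto
      then show ?thesis using c3 unfolding C3_def by blast
    qed
    moreover have "MAD M (\<lambda>\<omega>. \<Sum>k\<in>{i,j}. Y k \<omega>) = (\<integral>\<omega>. \<bar>\<Sum>k\<in>{i,j}. 1 * Z k \<omega>\<bar> \<partial>M)"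
      using lemA[of "{i,j}" "\<lambda>_. 1"] ij by simp
    ultimately have eq: "(\<integral>\<omega>. \<bar>Z i \<omega> + Z j \<omega>\<bar> \<partial>M) = (\<integral>\<omega>. \<bar>Z i \<omega>\<bar> \<partial>M) + (\<integral>\<omega>. \<bar>Z j \<omega>\<bar> \<partial>M)"
      using ij by (simp add: MADY)
    have intij: "integrable M (\<lambda>\<omega>. \<bar>Z i \<omega> + Z j \<omega>\<bar>)"
      unfolding Z_def using assms(3)[OF ij(1)] assms(3)[OF ij(2)]
      by (intro integrable_abs Bochner_Integration.integrable_add Bochner_Integration.integrable_diff integrable_const)
    have "(\<integral>\<omega>. \<bar>Z i \<omega>\<bar> + \<bar>Z j \<omega>\<bar> - \<bar>Z i \<omega> + Z j \<omega>\<bar> \<partial>M) = 0"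
      using eq intij intZ[OF ij(1)] intZ[OF ij(2)]
      by (simp only: Bochner_Integration.integral_diff Bochner_Integration.integral_add
          Bochner_Integration.integrable_add diff_self)
    moreover have intd: "integrable M (\<lambda>\<omega>. \<bar>Z i \<omega>\<bar> + \<bar>Z j \<omega>\<bar> - \<bar>Z i \<omega> + Z j \<omega>\<bar>)"
      using intij intZ[OF ij(1)] intZ[OF ij(2)]
      by (intro Bochner_Integration.integrable_diff Bochner_Integration.integrable_add)
    moreover have nn: "AE \<omega> in M. 0 \<le> \<bar>Z i \<omega>\<bar> + \<bar>Z j \<omega>\<bar> - \<bar>Z i \<omega> + Z j \<omega>\<bar>"
      by (intro AE_I2) (simp add: abs_triangle_ineq)
    ultimately have "AE \<omega> in M. \<bar>Z i \<omega>\<bar> + \<bar>Z j \<omega>\<bar> - \<bar>Z i \<omega> + Z j \<omega>\<bar> = 0"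
      using integral_nonneg_eq_0_iff_AE[OF intd nn] by simp
    then show "AE \<omega> in M. 0 \<le> (Y i \<omega> - (\<integral>\<omega>'. Y i \<omega>' \<partial>M)) * (Y j \<omega> - (\<integral>\<omega>'. Y j \<omega>' \<partial>M))"
    proof (rule AE_mp, intro AE_I2 impI)
      fix \<omega> assume "\<bar>Z i \<omega>\<bar> + \<bar>Z j \<omega>\<bar> - \<bar>Z i \<omega> + Z j \<omega>\<bar> = 0"
      then have "0 \<le> Z i \<omega> * Z j \<omega>"
        by (smt (verit, best) mult_nonneg_nonneg mult_nonpos_nonpos)
      then show "0 \<le> (Y i \<omega> - (\<integral>\<omega>'. Y i \<omega>' \<partial>M)) * (Y j \<omega> - (\<integral>\<omega>'. Y j \<omega>' \<partial>M))"
        unfolding Z_def E_def .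
    qed
  qed
  have 41: "C4 \<longrightarrow> C1"
  proof (intro impI, unfold C1_def, intro allI impI)
    assume c4: C4
    fix x :: "nat \<Rightarrow> real" assume x: "\<forall>i\<in>{1..n}. 0 \<le> x i"
    have "AE \<omega> in M. \<forall>i\<in>{1..n}. \<forall>j\<in>{1..n}. i \<noteq> j \<longrightarrow> 0 \<le> Z i \<omega> * Z j \<omega>"
      by (intro AE_finite_allI AE_impI finite_atLeastAtMost)
        (use c4 in \<open>unfold C4_def Z_def E_def, blast\<close>)
    then have "AE \<omega> in M. \<bar>\<Sum>i=1..n. x i * Z i \<omega>\<bar> = (\<Sum>i=1..n. x i * \<bar>Z i \<omega>\<bar>)"
      by (rule AE_mp, intro AE_I2 impI abs_sum_same_sign) (use x in auto)
    then have "(\<integral>\<omega>. \<bar>\<Sum>i=1..n. x i * Z i \<omega>\<bar> \<partial>M) = (\<integral>\<omega>. (\<Sum>i=1..n. x i * \<bar>Z i \<omega>\<bar>) \<partial>M)"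
    proof (rule integral_cong_AE[rotated 2])
      show "(\<lambda>\<omega>. \<bar>\<Sum>i=1..n. x i * Z i \<omega>\<bar>) \<in> borel_measurable M"
        unfolding Z_def
        by (intro borel_measurable_abs borel_measurable_sum borel_measurable_times
            borel_measurable_diff borel_measurable_const assms(2))
      show "(\<lambda>\<omega>. \<Sum>i=1..n. x i * \<bar>Z i \<omega>\<bar>) \<in> borel_measurable M"
        unfolding Z_def
        by (intro borel_measurable_abs borel_measurable_sum borel_measurable_times
            borel_measurable_diff borel_measurable_const assms(2))
    qed
    also have "\<dots> = (\<Sum>i=1..n. x i * MAD M (Y i))"
      using intZ by (subst Bochner_Integration.integral_sum) (auto simp: MADY)
    finally show "MAD M (\<lambda>\<omega>. \<Sum>i=1..n. x i * Y i \<omega>) = (\<Sum>i=1..n. x i * MAD M (Y i))"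
      using lemA[of "{1..n}" x] by simp
  qed
  show ?thesis using 12 23 34 41 by blast
qed

end
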